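(* Let $l$ be a prime number and let $a,b,c\in\mathbb{Z}$ satisfy $\gcd(a,b)=1$ and $(a-b)^4+a^4+(a+b)^4=c^l$. Let $K=\mathbb{Q}(\sqrt{30})$ and let $E_1,E_2$ be the elliptic curves over $K$ $$E_1:\ y^2=x^3+60a\,x^2+30\big((15+3\sqrt{30})a^2+\sqrt{30}\,b^2\big)x,$$ $$E_2:\ y^2=x^3+40b\,x^2+20\big(\sqrt{30}\,a^2+(10+2\sqrt{30})b^2\big)x,$$ with $j$-invariants $j_1(a,b)=j(E_1)$ and $j_2(a,b)=j(E_2)$. Then $j_1(a,b)$ and $j_2(a,b)$ are not integral. Moreover, there exists a prime of $K$ of residue characteristic $>5$ at which both $j_1(a,b)$ and $j_2(a,b)$ are non-integral. *)

theory Defs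
  imports Complex_Main "HOL-Computational_Algebra.Primes"
begin

text \<open>The field K = Q(sqrt 30) is realised as the subfield {p + q sqrt 30 | p q rational} of the reals.
  Since 30 is squarefree and 30 = 2 mod 4, its ring of integers is Z[sqrt 30].\<close>

definition K :: "real set" where
  "K = {of_rat p + of_rat q * sqrt 30 | p q. True}"

definition OK :: "real set" where
  "OK = {of_int m + of_int n * sqrt 30 | m n. True}"

definition prime_of_K :: "real set \<Rightarrow> bool" where
  "prime_of_K P \<longleftrightarrow>
     P \<subseteq> OK \<and> 0 \<in> P \<and>
     (\<forall>x\<in>P. \<forall>y\<in>P. x + y \<in> P) \<and>
     (\<forall>x\<in>P. -x \<in> P) \<and>
     (\<forall>x\<in>P. \<forall>r\<in>OK. r * x \<in> P) \<and>
     P \<noteq> OK \<and> P \<noteq> {0} \<and>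
     (\<forall>x\<in>OK. \<forall>y\<in>OK. x * y \<in> P \<longrightarrow> x \<in> P \<or> y \<in> P)"

definition residue_char :: "real set \<Rightarrow> nat \<Rightarrow> bool" where
  "residue_char P p \<longleftrightarrow> prime p \<and> real p \<in> P"

text \<open>x in K is integral at P iff it lies in the localisation of OK at P.\<close>
definition integral_at :: "real set \<Rightarrow> real \<Rightarrow> bool" where
  "integral_at P x \<longleftrightarrow> (\<exists>s\<in>OK - P. s * x \<in> OK)"

definition j_invariant :: "real \<Rightarrow> real \<Rightarrow> real \<Rightarrow> real \<Rightarrow> real \<Rightarrow> real" where
  "j_invariant a1 a2 a3 a4 a6 =
    (let b2 = a1^2 + 4*a2; b4 = 2*a4 + a1*a3; b6 = a3^2 + 4*a6;
         b8 = a1^2*a6 + 4*a2*a6 - a1*a3*a4 + a2*a3^2 - a4^2;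
         c4 = b2^2 - 24*b4;
         disc = -(b2^2*b8) - 8*b4^3 - 27*b6^2 + 9*b2*b4*b6
     in c4^3 / disc)"

definition j1 :: "int \<Rightarrow> int \<Rightarrow> real" where
  "j1 a b = j_invariant 0 (60 * a) 0
      (30 * ((15 + 3 * sqrt 30) * a^2 + sqrt 30 * b^2)) 0"

definition j2 :: "int \<Rightarrow> int \<Rightarrow> real" where
  "j2 a b = j_invariant 0 (40 * b) 0
      (20 * (sqrt 30 * a^2 + (10 + 2 * sqrt 30) * b^2)) 0"

end

theory Submission
  imports Defs "HOL-Number_Theory.Cong"
begin


lemma s30: "sqrt 30 * sqrt 30 = (30::real)" by simp

lemma descent30: "(x::int)^2 = 30 * y^2 \<Longrightarrow> y = 0"
proof (induction "nat \<bar>y\<bar>" arbitrary: x y rule: less_induct)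
  case less
  show ?case
  proof (rule ccontr)
    assume y0: "y \<noteq> 0"
    have "even (x^2)" using less.prems by simp
    then obtain x' where x': "x = 2*x'" by auto
    then have "2 * x'^2 = 15 * y^2" using less.prems by (simp add: power_mult_distrib)
    then have "15*y^2 = 2*x'^2" by simp
    then have "even (15*y^2)" by simp
    then have "even y" by simp
    then obtain y' where y': "y = 2*y'" by auto
    have "x'^2 = 30 * y'^2" using \<open>2 * x'^2 = 15 * y^2\<close> y' by (simp add: power_mult_distrib)
    moreover have "nat \<bar>y'\<bar> < nat \<bar>y\<bar>" using y' y0 by simp
    ultimately have "y' = 0" using less.hyps by blast
    then show False using y' y0 by simp
  qed
qed

lemma rep_unique:
  assumes "of_int m + of_int n * sqrt 30 = (of_int m' + of_int n' * sqrt 30 :: real)"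
  shows "m = m' \<and> n = n'"
proof -
  have e: "of_int (m - m') = of_int (n' - n) * sqrt 30" using assms by (simp add: algebra_simps)
  have "(of_int (m - m') :: real)^2 = (of_int (n' - n))^2 * (sqrt 30 * sqrt 30)"
    by (simp only: e power2_eq_square) (simp add: algebra_simps)
  then have "(of_int ((m - m')^2) :: real) = of_int (30 * (n' - n)^2)" by simp
  then have "(m - m')^2 = 30 * (n' - n)^2" by linarith
  then have "n' - n = 0" by (rule descent30)
  then show ?thesis using e by simp
qed

lemma OK_iff: "x \<in> OK \<longleftrightarrow> (\<exists>m n. x = of_int m + of_int n * sqrt 30)"
  unfolding OK_def by blast

lemma OK_int: "of_int k \<in> OK"
  unfolding OK_iff by (rule exI[of _ k], rule exI[of _ 0]) simp

lemma OK_add: "x \<in> OK \<Longrightarrow> y \<in> OK \<Longrightarrow> x + y \<in> OK"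
  unfolding OK_iff by (auto, rule_tac x="m+ma" in exI, rule_tac x="n+na" in exI, simp add: algebra_simps)

lemma OK_uminus: "x \<in> OK \<Longrightarrow> - x \<in> OK"
  unfolding OK_iff by (auto, rule_tac x="-m" in exI, rule_tac x="-n" in exI, simp add: algebra_simps)

lemma mult_rep: "(of_int m + of_int n * sqrt 30) * (of_int m' + of_int n' * sqrt 30) =
   (of_int (m*m' + 30*n*n') + of_int (m*n' + n*m') * sqrt 30 :: real)"
proof -
  have "(of_int m + of_int n * sqrt 30) * (of_int m' + of_int n' * sqrt 30) =
     (of_int m * of_int m' + of_int n * of_int n' * (sqrt 30 * sqrt 30) + (of_int m * of_int n' + of_int n * of_int m') * sqrt 30 :: real)"
    by (simp add: algebra_simps)
  also have "\<dots> = of_int (m*m' + 30*n*n') + of_int (m*n' + n*m') * sqrt 30" by simp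
  finally show ?thesis .
qed

lemma OK_mult: "x \<in> OK \<Longrightarrow> y \<in> OK \<Longrightarrow> x * y \<in> OK"
  unfolding OK_iff using mult_rep by blast

lemma OK_diff: "x \<in> OK \<Longrightarrow> y \<in> OK \<Longrightarrow> x - y \<in> OK"
  unfolding diff_conv_add_uminus by (intro OK_add OK_uminus)

lemma OK_sqrt: "sqrt 30 \<in> OK"
  unfolding OK_iff by (rule exI[of _ 0], rule exI[of _ 1]) simp

lemma OK_numeral: "numeral k \<in> OK"
  using OK_int[of "numeral k"] by simp

lemma OK_pow: "x \<in> OK \<Longrightarrow> x ^ n \<in> OK"
  by (induction n) (auto intro: OK_mult OK_int[of 1, simplified])

definition Pq :: "int \<Rightarrow> int \<Rightarrow> real set" where
  "Pq q s = {x. \<exists>m n. x = of_int m + of_int n * sqrt 30 \<and> q dvd m + n*s}"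

lemma memP: "of_int m + of_int n * sqrt 30 \<in> Pq q s \<longleftrightarrow> q dvd m + n*s"
  unfolding Pq_def using rep_unique by blast

lemma int_in_P: "of_int k \<in> Pq q s \<longleftrightarrow> q dvd k"
  using memP[of k 0 q s] by simp

lemma Pq_prime:
  assumes q: "prime q" and s: "q dvd s^2 - 30"
  shows "prime_of_K (Pq q s)"
proof -
  have key: "q dvd (m*m' + 30*n*n') + (m*n' + n*m')*s \<longleftrightarrow> q dvd (m + n*s)*(m' + n'*s)" for m n m' n'
  proof -
    have "(m + n*s)*(m' + n'*s) = (m*m' + 30*n*n') + (m*n' + n*m')*s + n*n'*(s^2-30)"
      by (simp add: algebra_simps power2_eq_square)
    moreover have h: "q dvd n*n'*(s^2-30)" using s by (rule dvd_mult)
    ultimately show ?thesis using dvd_add_left_iff[OF h] by simp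
  qed
  have sub: "Pq q s \<subseteq> OK" unfolding Pq_def OK_def by blast
  have z: "0 \<in> Pq q s" using int_in_P[of 0 q s] by simp
  have add: "\<forall>x\<in>Pq q s. \<forall>y\<in>Pq q s. x + y \<in> Pq q s"
  proof (intro ballI)
    fix x y assume "x \<in> Pq q s" "y \<in> Pq q s"
    then obtain m n m' n' where x: "x = of_int m + of_int n * sqrt 30" "q dvd m + n*s"
      and y: "y = of_int m' + of_int n' * sqrt 30" "q dvd m' + n'*s" unfolding Pq_def by blast
    have xy: "x + y = of_int (m+m') + of_int (n+n') * sqrt 30" using x y by (simp add: algebra_simps)
    have e: "(m+m') + (n+n')*s = (m + n*s) + (m' + n'*s)" by algebra
    have "q dvd (m+m') + (n+n')*s" unfolding e by (rule dvd_add[OF x(2) y(2)])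
    then show "x + y \<in> Pq q s" unfolding xy memP .
  qed
  have neg: "\<forall>x\<in>Pq q s. -x \<in> Pq q s"
  proof
    fix x assume "x \<in> Pq q s"
    then obtain m n where x: "x = of_int m + of_int n * sqrt 30" "q dvd m + n*s" unfolding Pq_def by blast
    have xx: "-x = of_int (-m) + of_int (-n) * sqrt 30" using x by simp
    have e: "(-m) + (-n)*s = -(m + n*s)" by algebra
    have "q dvd (-m) + (-n)*s" unfolding e dvd_minus_iff by (rule x(2))
    then show "-x \<in> Pq q s" unfolding xx memP .
  qed
  have mul: "\<forall>x\<in>Pq q s. \<forall>r\<in>OK. r * x \<in> Pq q s"
  proof (intro ballI)
    fix x r assume "x \<in> Pq q s" "r \<in> OK"
    then obtain m n m' n' where x: "x = of_int m + of_int n * sqrt 30" "q dvd m + n*s"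
      and r: "r = of_int m' + of_int n' * sqrt 30" unfolding Pq_def OK_iff by blast
    show "r * x \<in> Pq q s" unfolding x r mult_rep memP key using x(2) by simp
  qed
  have one: "Pq q s \<noteq> OK"
  proof
    assume "Pq q s = OK"
    then have "of_int 1 \<in> Pq q s" using OK_int[of 1] by simp
    then have "q dvd 1" using int_in_P[of 1 q s] by simp
    then show False using q not_prime_unit by blast
  qed
  have nz: "Pq q s \<noteq> {0}"
  proof
    assume "Pq q s = {0}"
    moreover have "of_int q \<in> Pq q s" using int_in_P[of q q s] by simp
    ultimately have "q = 0" by simp
    then show False using q by simp
  qed
  have pr: "\<forall>x\<in>OK. \<forall>y\<in>OK. x * y \<in> Pq q s \<longrightarrow> x \<in> Pq q s \<or> y \<in> Pq q s"
  proof (intro ballI impI)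
    fix x y assume "x \<in> OK" "y \<in> OK" and xy: "x * y \<in> Pq q s"
    then obtain m n m' n' where x: "x = of_int m + of_int n * sqrt 30"
      and y: "y = of_int m' + of_int n' * sqrt 30" unfolding OK_iff by blast
    have "q dvd (m + n*s)*(m' + n'*s)" using xy unfolding x y mult_rep memP key .
    then have "q dvd m + n*s \<or> q dvd m' + n'*s" using q prime_dvd_mult_iff by blast
    then show "x \<in> Pq q s \<or> y \<in> Pq q s" unfolding x y memP .
  qed
  show ?thesis unfolding prime_of_K_def using sub z add neg mul one nz pr by blast
qed



lemma j_form: "j_invariant 0 A 0 B 0 = (16*(A^2-3*B))^3 / (16*B^2*(A^2-4*B))"
  unfolding j_invariant_def Let_def by (simp add: algebra_simps power2_eq_square power3_eq_cube)

lemma j_nonint: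
  assumes P: "prime_of_K P" and A: "A \<in> OK" and B: "B \<in> OK" and AP: "A \<notin> P"
    and BP: "B*(A^2-4*B) \<in> P" and B0: "B \<noteq> 0" and D0: "A^2-4*B \<noteq> 0" and two: "2 \<notin> P"
  shows "\<not> integral_at P (j_invariant 0 A 0 B 0)"
proof
  assume "integral_at P (j_invariant 0 A 0 B 0)"
  then obtain s where s: "s \<in> OK" "s \<notin> P" and t: "s * j_invariant 0 A 0 B 0 \<in> OK"
    unfolding integral_at_def by blast
  from P have sub: "P \<subseteq> OK" and add: "\<forall>x\<in>P. \<forall>y\<in>P. x + y \<in> P" and neg: "\<forall>x\<in>P. -x \<in> P"
    and mul: "\<forall>x\<in>P. \<forall>r\<in>OK. r * x \<in> P"
    and pr: "\<forall>x\<in>OK. \<forall>y\<in>OK. x * y \<in> P \<longrightarrow> x \<in> P \<or> y \<in> P"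
    unfolding prime_of_K_def by blast+
  define c4 where "c4 = A^2 - 3*B"
  define D where "D = 16*B^2*(A^2-4*B)"
  have D00: "D \<noteq> 0" using B0 D0 unfolding D_def by simp
  have c4OK: "c4 \<in> OK" unfolding c4_def using A B
    by (intro OK_diff OK_pow OK_mult OK_numeral)
  have A2OK: "A^2 \<in> OK" using A by (intro OK_pow)
  have DP: "D \<in> P"
  proof -
    have "D = (16*B) * (B*(A^2-4*B))" unfolding D_def by (simp add: algebra_simps power2_eq_square)
    moreover have "16*B \<in> OK" using B by (intro OK_mult OK_numeral)
    ultimately show ?thesis using mul BP by simp
  qed
  have "s * (16*c4)^3 = (s * j_invariant 0 A 0 B 0) * D"
    unfolding j_form c4_def D_def using D00[unfolded D_def] by simp
  also have "\<dots> \<in> P" using mul DP t by blast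
  finally have e: "s * (16*c4)^3 \<in> P" .
  have "16 * c4 \<in> OK" using c4OK by (intro OK_mult OK_numeral)
  then have "(16*c4)^3 \<in> OK" by (rule OK_pow)
  then have "(16*c4)^3 \<in> P" using pr s e by blast
  then have "(16*c4) * ((16*c4) * (16*c4)) \<in> P" by (simp add: power3_eq_cube)
  then have "16*c4 \<in> P \<or> (16*c4) * (16*c4) \<in> P" using pr \<open>16 * c4 \<in> OK\<close> OK_mult by blast
  then have "16*c4 \<in> P" using pr \<open>16 * c4 \<in> OK\<close> by blast
  then have "2*(2*(2*(2*c4))) \<in> P" by simp
  moreover have two': "(2::real) \<in> OK" using OK_numeral by blast
  ultimately have "2*(2*(2*c4)) \<in> P" using pr two c4OK OK_mult by blast
  then have "2*(2*c4) \<in> P" using pr two two' c4OK OK_mult by blast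
  then have "2*c4 \<in> P" using pr two two' c4OK OK_mult by blast
  then have c4P: "c4 \<in> P" using pr two two' c4OK by blast
  have B2OK: "A^2-4*B \<in> OK" using A B by (intro OK_diff OK_pow OK_mult OK_numeral)
  have "B \<in> P \<or> A^2-4*B \<in> P" using pr BP B B2OK by blast
  then have "A^2 \<in> P"
  proof
    assume "B \<in> P"
    then have "3*B \<in> P" using mul OK_numeral by blast
    then have "c4 + 3*B \<in> P" using add c4P by blast
    then show ?thesis unfolding c4_def by simp
  next
    assume h: "A^2-4*B \<in> P"
    then have "-(3*(A^2-4*B)) \<in> P" using mul neg OK_numeral by blast
    moreover have "4*c4 \<in> P" using mul c4P OK_numeral by blast
    ultimately have "4*c4 + -(3*(A^2-4*B)) \<in> P" using add by blast
    then show ?thesis unfolding c4_def by (simp add: algebra_simps)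
  qed
  then have "A * A \<in> P" by (simp add: power2_eq_square)
  then show False using pr A AP by blast
qed



lemma dvd_sub2: "(d::int) dvd x + y \<Longrightarrow> d dvd x \<Longrightarrow> d dvd y"
  by (simp add: dvd_add_right_iff)

lemma mod5: fixes a b :: int
  assumes "5 dvd 3*a^4 + 12*a^2*b^2 + 2*b^4" shows "5 dvd a \<and> 5 dvd b"
proof -
  have ca: "[a mod 5 = a] (mod 5)" and cb: "[b mod 5 = b] (mod 5)" by (simp_all add: cong_def)
  have "[3*(a mod 5)^4 + 12*(a mod 5)^2*(b mod 5)^2 + 2*(b mod 5)^4 = 3*a^4 + 12*a^2*b^2 + 2*b^4] (mod 5)"
    by (intro cong_add cong_mult cong_pow cong_refl ca cb)
  then have "(3*(a mod 5)^4 + 12*(a mod 5)^2*(b mod 5)^2 + 2*(b mod 5)^4) mod 5 = (3*a^4 + 12*a^2*b^2 + 2*b^4) mod 5"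
    by (simp add: cong_def)
  also have "\<dots> = 0" using assms by simp
  finally have h: "(3*(a mod 5)^4 + 12*(a mod 5)^2*(b mod 5)^2 + 2*(b mod 5)^4) mod 5 = 0" .
  have ra: "a mod 5 \<in> {0,1,2,3,4}" and rb: "b mod 5 \<in> {0,1,2,3,4}" by auto
  from ra rb h have "a mod 5 = 0 \<and> b mod 5 = 0" by auto
  then show ?thesis by auto
qed

lemma not2: fixes a b :: int
  assumes g: "gcd a b = 1" and d: "4 dvd 3*a^4 + 12*a^2*b^2 + 2*b^4" shows False
proof (cases "even a")
  case True
  then obtain k where k: "a = 2*k" by auto
  have "3*a^4 + 12*a^2*b^2 + 2*b^4 = 4*(12*k^4 + 12*k^2*b^2) + 2*b^4" unfolding k by algebra
  with d have "4 dvd 4*(12*k^4 + 12*k^2*b^2) + 2*b^4" by simp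
  then have "4 dvd 2*b^4" by (rule dvd_sub2) simp
  then obtain k' where "2*b^4 = 4*k'" by (auto elim: dvdE)
  then have "b^4 = 2*k'" by simp
  then have "even (b^4)" by simp
  then have "even b" by simp
  then have "2 dvd gcd a b" using True by simp
  then show False using g by simp
next
  case False
  then have "odd (3*a^4 + 12*a^2*b^2 + 2*b^4)" by simp
  moreover have "even (3*a^4 + 12*a^2*b^2 + 2*b^4)" using dvd_trans[OF _ d, of 2] by simp
  ultimately show False by simp
qed

lemma not3: fixes a b :: int
  assumes g: "gcd a b = 1" and d: "9 dvd 3*a^4 + 12*a^2*b^2 + 2*b^4" shows False
proof -
  have "3 dvd 3*a^4 + 12*a^2*b^2 + 2*b^4" using dvd_trans[OF _ d, of 3] by simp
  then have "3 dvd 2*b^4" by (simp add: dvd_add_right_iff)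
  then have "3 dvd b^4" using prime_dvd_mult_iff[of "3::int"] by auto
  then have "3 dvd b" using prime_dvd_power[of "3::int"] by auto
  then obtain k where k: "b = 3*k" by auto
  have "3*a^4 + 12*a^2*b^2 + 2*b^4 = 9*(12*a^2*k^2 + 18*k^4) + 3*a^4" unfolding k by algebra
  with d have "9 dvd 9*(12*a^2*k^2 + 18*k^4) + 3*a^4" by simp
  then have "9 dvd 3*a^4" by (rule dvd_sub2) simp
  then have "3 dvd a^4" by auto
  then have "3 dvd a" using prime_dvd_power[of "3::int"] by auto
  then have "3 dvd gcd a b" using \<open>3 dvd b\<close> by simp
  then show False using g by simp
qed



lemma id1: assumes "(r::real)^2 = 30" shows "30 * ((15 + 3 * r) * (x::real)^2 + r * y^2) * ((60*x)^2 - 4*(30 * ((15 + 3 * r) * x^2 + r * y^2)))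
  = -54000 * (3*x^4 + 12*x^2*y^2 + 2*y^4)"
proof -
  have "30 * ((15 + 3 * r) * (x::real)^2 + r * y^2) * ((60*x)^2 - 4*(30 * ((15 + 3 * r) * x^2 + r * y^2)))
     = 3600*(225*x^4 - r^2*(3*x^2+y^2)^2)" by algebra
  also have "\<dots> = -54000 * (3*x^4 + 12*x^2*y^2 + 2*y^4)" unfolding assms by algebra
  finally show ?thesis .
qed
lemma id2: assumes "(r::real)^2 = 30" shows "20 * (r * x^2 + (10 + 2 * r) * y^2) * ((40*y)^2 - 4*(20 * (r * x^2 + (10 + 2 * r) * y^2)))
  = -16000 * (3*x^4 + 12*x^2*y^2 + 2*y^4)"
proof -
  have "20 * (r * x^2 + (10 + 2 * r) * y^2) * ((40*y)^2 - 4*(20 * (r * x^2 + (10 + 2 * r) * y^2)))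
     = 1600*(100*y^4 - r^2*(x^2+2*y^2)^2)" by algebra
  also have "\<dots> = -16000 * (3*x^4 + 12*x^2*y^2 + 2*y^4)" unfolding assms by algebra
  finally show ?thesis .
qed

theorem lemma4p1:
  fixes l :: nat and a b c :: int
  assumes "prime l"
    and "gcd a b = 1"
    and "(a - b)^4 + a^4 + (a + b)^4 = c ^ l"
  shows "j1 a b \<notin> OK \<and> j2 a b \<notin> OK \<and>
         (\<exists>P p. prime_of_K P \<and> residue_char P p \<and> p > 5 \<and>
                \<not> integral_at P (j1 a b) \<and> \<not> integral_at P (j2 a b))"
proof -
  define N where "N = 3*a^4 + 12*a^2*b^2 + 2*b^4"
  have "(a - b)^4 + a^4 + (a + b)^4 = N" unfolding N_def by algebra
  then have Nc: "N = c^l" using assms(3) by simp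
  have l2: "l \<ge> 2" using assms(1) prime_ge_2_nat by blast
  have ab: "a \<noteq> 0 \<or> b \<noteq> 0" using assms(2) by auto
  have "a^4 > 0 \<or> b^4 > 0" using ab by simp
  moreover have "a^4 \<ge> 0" "b^4 \<ge> 0" "a^2*b^2 \<ge> 0" by simp_all
  ultimately have Npos: "N > 0" unfolding N_def by linarith
  have N1: "N \<noteq> 1"
  proof
    assume N1: "N = 1"
    show False
    proof (cases "a = 0")
      case True
      then have "2*b^4 = 1" using N1 unfolding N_def by simp
      then show False by presburger
    next
      case False
      then have "a^2 > 0" by simp
      then have a2: "a^2 \<ge> 1" by linarith
      have "a^4 = a^2 * a^2" by algebra
      then have "a^4 \<ge> 1" using mult_mono[OF a2 a2] by simp
      moreover have "12*a^2*b^2 + 2*b^4 \<ge> 0" by simp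
      ultimately show False using N1 unfolding N_def by linarith
    qed
  qed
  have c0: "c \<noteq> 0" using Npos Nc l2 by (cases l) auto
  have cu: "\<not> is_unit c"
  proof
    assume "is_unit c"
    then have "\<bar>c\<bar> = 1" by (simp add: zdvd1_eq)
    then have "\<bar>N\<bar> = 1" unfolding Nc by (simp add: power_abs)
    then show False using N1 Npos by simp
  qed
  have dvdN: "d dvd N" if "d dvd c" for d
  proof -
    have "c dvd c^l" using l2 by (simp add: dvd_power)
    then show ?thesis unfolding Nc by (rule dvd_trans[OF that])
  qed
  have sq: "d*d dvd N" if "d dvd c" for d
  proof -
    have "d^2 dvd c^2" using that by simp
    moreover have "c^2 dvd c^l" using l2 by (simp add: le_imp_power_dvd)
    ultimately have "d^2 dvd N" unfolding Nc by (rule dvd_trans)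
    then show ?thesis by (simp add: power2_eq_square)
  qed
  obtain q where q: "prime q" "q dvd c" using prime_divisor_exists[OF c0 cu] by blast
  have q2: "q \<noteq> 2" proof assume "q = 2" then have "4 dvd N" using sq[OF q(2)] by simp
    then show False unfolding N_def by (rule not2[OF assms(2)]) qed
  have q4: "q \<noteq> 4" proof assume "q = 4" then have "2 dvd q" by simp
    then have "2 dvd c" using q(2) dvd_trans by blast
    then have "4 dvd N" using sq[of 2] by simp
    then show False unfolding N_def by (rule not2[OF assms(2)]) qed
  have q3: "q \<noteq> 3" proof assume "q = 3" then have "9 dvd N" using sq[OF q(2)] by simp
    then show False unfolding N_def by (rule not3[OF assms(2)]) qed
  have q5: "q \<noteq> 5" proof assume "q = 5" then have "5 dvd N" using dvdN[OF q(2)] by simp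
    then have "5 dvd a \<and> 5 dvd b" using mod5 unfolding N_def by blast
    then have "5 dvd gcd a b" by simp
    then show False using assms(2) by simp qed
  have qge: "q \<ge> 2" using q(1) prime_ge_2_int by blast
  have q6: "q > 5" using qge q2 q3 q4 q5 by linarith
  have qN: "q dvd N" using dvdN q(2) .
  have small: "\<not> q dvd k" if "k \<in> {2,3,5}" for k
    using that q6 zdvd_imp_le[of q k] by auto
  have sm2: "\<not> q dvd 2" and sm3: "\<not> q dvd 3" and sm5: "\<not> q dvd 5" using small by auto
  have q60: "\<not> q dvd 60" and q40: "\<not> q dvd 40" and q225: "\<not> q dvd 225" and q2': "\<not> q dvd 2"
  proof -
    have "\<not> q dvd 2*(2*(3*5))" by (simp only: prime_dvd_mult_iff[OF q(1)]) (simp add: sm2 sm3 sm5)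
    then show "\<not> q dvd 60" by simp
    have "\<not> q dvd 2*(2*(2*5))" by (simp only: prime_dvd_mult_iff[OF q(1)]) (simp add: sm2 sm3 sm5)
    then show "\<not> q dvd 40" by simp
    have "\<not> q dvd 3*(3*(5*5))" by (simp only: prime_dvd_mult_iff[OF q(1)]) (simp add: sm2 sm3 sm5)
    then show "\<not> q dvd 225" by simp
    show "\<not> q dvd 2" using small by simp
  qed
  have qa: "\<not> q dvd a"
  proof
    assume "q dvd a"
    then have "q dvd a^4" "q dvd a^2" using dvd_trans[OF \<open>q dvd a\<close>, of "a^4"] dvd_trans[OF \<open>q dvd a\<close>, of "a^2"] by simp_all
    then have "q dvd 3*a^4 + 12*a^2*b^2" by simp
    then have "q dvd 2*b^4" using qN unfolding N_def by (simp add: dvd_add_right_iff)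
    then have "q dvd b" using sm2 by (auto simp: prime_dvd_mult_iff[OF q(1)] dest: prime_dvd_power[OF q(1)])
    then have "q dvd gcd a b" using \<open>q dvd a\<close> by simp
    then show False using assms(2) q6 by simp
  qed
  have qb: "\<not> q dvd b"
  proof
    assume "q dvd b"
    then have "q dvd b^4" "q dvd b^2" using dvd_trans[OF \<open>q dvd b\<close>, of "b^4"] dvd_trans[OF \<open>q dvd b\<close>, of "b^2"] by simp_all
    then have "q dvd 12*a^2*b^2 + 2*b^4" by simp
    moreover have "N = 3*a^4 + (12*a^2*b^2 + 2*b^4)" unfolding N_def by simp
    ultimately have "q dvd 3*a^4" using qN dvd_add_left_iff by auto
    then have "q dvd a" using sm3 by (auto simp: prime_dvd_mult_iff[OF q(1)] dest: prime_dvd_power[OF q(1)])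
    then show False using qa by simp
  qed
  define u where "u = 3*a^2 + b^2"
  have uN: "225*a^4 - 30*u^2 = -15*N" unfolding u_def N_def by algebra
  have qu: "\<not> q dvd u"
  proof
    assume "q dvd u"
    then have "q dvd u^2" using dvd_trans[OF \<open>q dvd u\<close>, of "u^2"] by simp
    then have "q dvd 30*u^2 - 15*N" using qN by simp
    moreover have "225*a^4 = 30*u^2 - 15*N" using uN by linarith
    ultimately have "q dvd 225*a^4" using qN by simp
    then show False using q225 qa by (auto simp: prime_dvd_mult_iff[OF q(1)] dest: prime_dvd_power[OF q(1)])
  qed
  have "coprime u q" using qu q(1) by (simp add: coprime_commute prime_imp_coprime)
  then obtain v where v: "[u*v = 1] (mod q)" using cong_solve_coprime_int by blast
  define s where "s = 15*a^2*v"
  have "q dvd u*v - 1" using v by (simp add: cong_iff_dvd_diff)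
  then obtain k where "u*v - 1 = q*k" by (auto elim: dvdE)
  then have k: "u*v = 1 + q*k" by simp
  have "u^2*(s^2-30) = 225*a^4*(u*v)^2 - 30*u^2" unfolding s_def by algebra
  also have "\<dots> = -15*N + q*(225*a^4*(2*k + q*k^2))" unfolding k using uN by algebra
  finally have "q dvd u^2*(s^2-30)" using qN by simp
  then have qs: "q dvd s^2 - 30" using qu by (auto simp: prime_dvd_mult_iff[OF q(1)] dest: prime_dvd_power[OF q(1)])
  define P where "P = Pq q s"
  have PK: "prime_of_K P" unfolding P_def using Pq_prime q(1) qs by blast
  have intP: "of_int k \<in> P \<longleftrightarrow> q dvd k" for k unfolding P_def by (rule int_in_P)
  have rc: "residue_char P (nat q)" unfolding residue_char_def
    using q(1) qge intP[of q] by (simp add: prime_nat_iff_prime)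
  have two: "2 \<notin> P" using intP[of 2] q2' by simp
  have ab': "real_of_int a \<noteq> 0 \<or> real_of_int b \<noteq> 0" using ab by simp
  have sqpos: "sqrt 30 > 0" by simp
  have s30: "sqrt 30 * sqrt 30 = (30::real)" by simp
  have sq30: "sqrt 30 ^ 2 = (30::real)" by simp
  have NR: "(real_of_int N) \<noteq> 0" using Npos by simp
  have NRdef: "real_of_int N = 3*(of_int a)^4 + 12*(of_int a)^2*(of_int b)^2 + 2*(of_int b)^4"
    unfolding N_def by simp
  have qNP: "of_int (m*N) \<in> P" for m using intP[of "m*N"] qN by simp
  define A1 where "A1 = 60 * real_of_int a"
  define B1 where "B1 = 30 * ((15 + 3 * sqrt 30) * real_of_int a^2 + sqrt 30 * real_of_int b^2)"
  have j1e: "j1 a b = j_invariant 0 A1 0 B1 0" unfolding j1_def A1_def B1_def by simp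
  have nj1: "\<not> integral_at P (j1 a b)" unfolding j1e
  proof (rule j_nonint[OF PK _ _ _ _ _ _ two])
    show "A1 \<in> OK" unfolding A1_def by (intro OK_mult OK_numeral OK_int)
    show "B1 \<in> OK" unfolding B1_def by (intro OK_mult OK_numeral OK_int OK_add OK_pow OK_sqrt)
    show "A1 \<notin> P" unfolding A1_def using intP[of "60*a"] q(1) q60 qa prime_dvd_mult_iff by auto
    have "B1*(A1^2-4*B1) = of_int (-54000*N)" unfolding B1_def A1_def
      using id1[OF sq30, of "of_int a" "of_int b"] NRdef by simp
    then show "B1*(A1^2-4*B1) \<in> P" using qNP[of "-54000"] by simp
    have p1: "(15 + 3 * sqrt 30) * real_of_int a^2 \<ge> 0" "sqrt 30 * real_of_int b^2 \<ge> 0" by simp_all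
    have "(15 + 3 * sqrt 30) * real_of_int a^2 > 0 \<or> sqrt 30 * real_of_int b^2 > 0"
      using ab' sqpos by (auto intro!: mult_pos_pos add_pos_pos)
    then have "(15 + 3 * sqrt 30) * real_of_int a^2 + sqrt 30 * real_of_int b^2 > 0" using p1 by linarith
    then show "B1 \<noteq> 0" unfolding B1_def by simp
    show "A1^2 - 4*B1 \<noteq> 0"
    proof
      assume h: "A1^2 - 4*B1 = 0"
      have "A1^2 - 4*B1 = 120*(15*of_int a^2 - sqrt 30 * (3*of_int a^2 + of_int b^2))"
        unfolding A1_def B1_def by (simp add: algebra_simps power2_eq_square)
      with h have e: "15*of_int a^2 = sqrt 30 * (3*of_int a^2 + of_int b^2)" by simp
      have "(15*of_int a^2)^2 = (sqrt 30 * sqrt 30) * (3*of_int a^2 + of_int b^2)^2"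
        unfolding e by (simp add: algebra_simps power2_eq_square)
      then have "-15 * real_of_int N = 0" unfolding NRdef s30 by (simp add: algebra_simps power2_eq_square power4_eq_xxxx)
      then show False using NR by simp
    qed
  qed
  define A2 where "A2 = 40 * real_of_int b"
  define B2 where "B2 = 20 * (sqrt 30 * real_of_int a^2 + (10 + 2 * sqrt 30) * real_of_int b^2)"
  have j2e: "j2 a b = j_invariant 0 A2 0 B2 0" unfolding j2_def A2_def B2_def by simp
  have nj2: "\<not> integral_at P (j2 a b)" unfolding j2e
  proof (rule j_nonint[OF PK _ _ _ _ _ _ two])
    show "A2 \<in> OK" unfolding A2_def by (intro OK_mult OK_numeral OK_int)
    show "B2 \<in> OK" unfolding B2_def by (intro OK_mult OK_numeral OK_int OK_add OK_pow OK_sqrt)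
    show "A2 \<notin> P" unfolding A2_def using intP[of "40*b"] q(1) q40 qb prime_dvd_mult_iff by auto
    have "B2*(A2^2-4*B2) = of_int (-16000*N)" unfolding B2_def A2_def
      using id2[OF sq30, of "of_int a" "of_int b"] NRdef by simp
    then show "B2*(A2^2-4*B2) \<in> P" using qNP[of "-16000"] by simp
    have p1: "sqrt 30 * real_of_int a^2 \<ge> 0" "(10 + 2 * sqrt 30) * real_of_int b^2 \<ge> 0" by simp_all
    have "sqrt 30 * real_of_int a^2 > 0 \<or> (10 + 2 * sqrt 30) * real_of_int b^2 > 0"
      using ab' sqpos by (auto intro!: mult_pos_pos add_pos_pos)
    then have "sqrt 30 * real_of_int a^2 + (10 + 2 * sqrt 30) * real_of_int b^2 > 0" using p1 by linarith
    then show "B2 \<noteq> 0" unfolding B2_def by simp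
    show "A2^2 - 4*B2 \<noteq> 0"
    proof
      assume h: "A2^2 - 4*B2 = 0"
      have "A2^2 - 4*B2 = 80*(10*of_int b^2 - sqrt 30 * (of_int a^2 + 2*of_int b^2))"
        unfolding A2_def B2_def by (simp add: algebra_simps power2_eq_square)
      with h have e: "10*of_int b^2 = sqrt 30 * (of_int a^2 + 2*of_int b^2)" by simp
      have "(10*of_int b^2)^2 = (sqrt 30 * sqrt 30) * (of_int a^2 + 2*of_int b^2)^2"
        unfolding e by (simp add: algebra_simps power2_eq_square)
      then have "-10 * real_of_int N = 0" unfolding NRdef s30 by (simp add: algebra_simps power2_eq_square power4_eq_xxxx)
      then show False using NR by simp
    qed
  qed
  have oneP: "1 \<notin> P" using intP[of 1] q6 by simp
  have "j1 a b \<notin> OK" using nj1 oneP unfolding integral_at_def using OK_int[of 1] by force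
  moreover have "j2 a b \<notin> OK" using nj2 oneP unfolding integral_at_def using OK_int[of 1] by force
  moreover have "nat q > 5" using q6 by simp
  ultimately show ?thesis using PK rc nj1 nj2 by blast
qed

end
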